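(* Let $\varphi\colon (A,m,K)\to (B,n,L)$ be a local homomorphism of noetherian local rings and $I$ a proper ideal of $A$. Then $0\leq \delta_A(I)-\delta^\varphi_B(I)\leq \operatorname{rd}(\varphi)$.
   Context: All rings are commutative and noetherian with identity. A local homomorphism satisfies $\varphi(m)\subseteq n$; $K=A/m$, $L=B/n$. $\delta_A(I)=\dim_K\big((I+m^2)/m^2\big)$ and $\delta^\varphi_B(I)=\dim_L\big((IB+n^2)/n^2\big)$. The regularity defect $\operatorname{rd}(\varphi)$ is the $L$-dimension of the kernel of the natural $L$-linear map $m/m^2\otimes_K L\to n/n^2$, $\bar x\otimes\bar b\mapsto \overline{\varphi(x)b}$. *)

theory Defs
  imports Main
begin

text \<open>Commutative rings are rendered as types of class comm_ring_1: the ring A is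
the type 'a, the ring B is the type 'b.\<close>

definition is_ideal :: "'a::comm_ring_1 set \<Rightarrow> bool" where
  "is_ideal I \<longleftrightarrow> 0 \<in> I \<and> (\<forall>x\<in>I. \<forall>y\<in>I. x + y \<in> I) \<and> (\<forall>x\<in>I. \<forall>r. r * x \<in> I)"

definition ideal_gen :: "'a::comm_ring_1 set \<Rightarrow> 'a set" where
  "ideal_gen F = {\<Sum>x\<in>F. c x * x | c. True}"

definition noetherian :: "'a::comm_ring_1 itself \<Rightarrow> bool" where
  "noetherian (t::'a itself) \<longleftrightarrow> (\<forall>I::'a set. is_ideal I \<longrightarrow> (\<exists>F. finite F \<and> F \<subseteq> I \<and> I = ideal_gen F))"

definition maximal_ideal :: "'a::comm_ring_1 set \<Rightarrow> bool" where
  "maximal_ideal M \<longleftrightarrow> is_ideal M \<and> M \<noteq> UNIV \<and>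
     (\<forall>J. is_ideal J \<longrightarrow> M \<subseteq> J \<longrightarrow> J = M \<or> J = UNIV)"

definition local_ring :: "'a::comm_ring_1 set \<Rightarrow> bool" where
  "local_ring M \<longleftrightarrow> maximal_ideal M \<and> (\<forall>M'. maximal_ideal M' \<longrightarrow> M' = M)"

definition ring_hom :: "('a::comm_ring_1 \<Rightarrow> 'b::comm_ring_1) \<Rightarrow> bool" where
  "ring_hom f \<longleftrightarrow> f 0 = 0 \<and> f 1 = 1 \<and> (\<forall>x y. f (x + y) = f x + f y) \<and> (\<forall>x y. f (x * y) = f x * f y)"

definition ideal_mult :: "'a::comm_ring_1 set \<Rightarrow> 'a set \<Rightarrow> 'a set" where
  "ideal_mult I J = {\<Sum>i<k. x i * y i | (k::nat) x y. \<forall>i<k. x i \<in> I \<and> y i \<in> J}"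

definition ideal_add :: "'a::comm_ring_1 set \<Rightarrow> 'a set \<Rightarrow> 'a set" where
  "ideal_add I J = {x + y | x y. x \<in> I \<and> y \<in> J}"

definition ext_ideal :: "('a::comm_ring_1 \<Rightarrow> 'b::comm_ring_1) \<Rightarrow> 'a set \<Rightarrow> 'b set" where
  "ext_ideal f I = {\<Sum>i<k. f (a i) * b i | (k::nat) a b. \<forall>i<k. a i \<in> I}"

text \<open>Linear independence of v_0..v_(k-1) in the R/M-vector space S/N (M maximal,
  M S \<subseteq> N \<subseteq> S), written with representatives: scalars are elements of R taken mod M.\<close>
definition indep_mod :: "'a::comm_ring_1 set \<Rightarrow> 'a set \<Rightarrow> nat \<Rightarrow> (nat \<Rightarrow> 'a) \<Rightarrow> bool" where
  "indep_mod M N k v \<longleftrightarrow> (\<forall>c. (\<Sum>i<k. c i * v i) \<in> N \<longrightarrow> (\<forall>i<k. c i \<in> M))"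

definition dim_mod :: "'a::comm_ring_1 set \<Rightarrow> 'a set \<Rightarrow> 'a set \<Rightarrow> nat" where
  "dim_mod M N S = Sup {k. \<exists>v. (\<forall>i<k. v i \<in> S) \<and> indep_mod M N k v}"

definition delta_A :: "'a::comm_ring_1 set \<Rightarrow> 'a set \<Rightarrow> nat" where
  "delta_A m I = dim_mod m (ideal_mult m m) (ideal_add I (ideal_mult m m))"

definition delta_B :: "('a::comm_ring_1 \<Rightarrow> 'b::comm_ring_1) \<Rightarrow> 'b set \<Rightarrow> 'a set \<Rightarrow> nat" where
  "delta_B f n I = dim_mod n (ideal_mult n n) (ideal_add (ext_ideal f I) (ideal_mult n n))"

definition cotangent_basis :: "'a::comm_ring_1 set \<Rightarrow> nat \<Rightarrow> (nat \<Rightarrow> 'a) \<Rightarrow> bool" where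
  "cotangent_basis m d x \<longleftrightarrow> (\<forall>i<d. x i \<in> m) \<and> indep_mod m (ideal_mult m m) d x \<and>
     (\<forall>y\<in>m. \<exists>c. y - (\<Sum>i<d. c i * x i) \<in> ideal_mult m m)"

text \<open>Using the basis x of m/m^2, m/m^2 \<otimes>_K L is identified with L^d (tuples of
  elements of B modulo n), and the natural map becomes
  (b_i) \<mapsto> sum_i phi(x_i) b_i mod n^2. Its kernel is
  {b. sum_i phi(x_i) b_i \<in> n^2}; rd_wrt is its L-dimension.\<close>
definition tuple_indep :: "'b::comm_ring_1 set \<Rightarrow> nat \<Rightarrow> nat \<Rightarrow> (nat \<Rightarrow> nat \<Rightarrow> 'b) \<Rightarrow> bool" where
  "tuple_indep n d k w \<longleftrightarrow>
     (\<forall>c. (\<forall>i<d. (\<Sum>j<k. c j * w j i) \<in> n) \<longrightarrow> (\<forall>j<k. c j \<in> n))"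

definition rd_wrt :: "('a::comm_ring_1 \<Rightarrow> 'b::comm_ring_1) \<Rightarrow> 'b set \<Rightarrow> nat \<Rightarrow> (nat \<Rightarrow> 'a) \<Rightarrow> nat" where
  "rd_wrt f n d x = Sup {k. \<exists>w. (\<forall>j<k. (\<Sum>i<d. f (x i) * w j i) \<in> ideal_mult n n) \<and> tuple_indep n d k w}"

definition rd :: "('a::comm_ring_1 \<Rightarrow> 'b::comm_ring_1) \<Rightarrow> 'a set \<Rightarrow> 'b set \<Rightarrow> nat" where
  "rd f m n = (let (d, x) = (SOME p. cotangent_basis m (fst p) (snd p)) in rd_wrt f n d x)"

end

theory Submission
  imports Defs "HOL.Modules" "HOL-Library.Function_Algebras"
begin

locale lin = module sm
  for sm :: "'r::comm_ring_1 \<Rightarrow> 'v::ab_group_add \<Rightarrow> 'v" +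
  fixes M :: "'r set" and N :: "'v set" and V :: "'v set"
  assumes M_add: "a \<in> M \<Longrightarrow> b \<in> M \<Longrightarrow> a + b \<in> M"
    and M_mult: "a \<in> M \<Longrightarrow> r * a \<in> M"
    and one_notin: "1 \<notin> M"
    and M_inv: "c \<notin> M \<Longrightarrow> \<exists>b. b * c - 1 \<in> M"
    and N_zero: "0 \<in> N"
    and N_add: "x \<in> N \<Longrightarrow> y \<in> N \<Longrightarrow> x + y \<in> N"
    and N_minus: "x \<in> N \<Longrightarrow> - x \<in> N"
    and N_scale: "x \<in> N \<Longrightarrow> sm r x \<in> N"
    and N_V: "x \<in> N \<Longrightarrow> x \<in> V"
    and V_add: "x \<in> V \<Longrightarrow> y \<in> V \<Longrightarrow> x + y \<in> V"
    and V_scale: "x \<in> V \<Longrightarrow> sm r x \<in> V"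
    and MV: "a \<in> M \<Longrightarrow> x \<in> V \<Longrightarrow> sm a x \<in> N"
begin

lemma M_minus: "a \<in> M \<Longrightarrow> - a \<in> M"
  using M_mult[of a "-1"] by simp

lemma M_diff: "a \<in> M \<Longrightarrow> b \<in> M \<Longrightarrow> a - b \<in> M"
  using M_add[of a "-b"] M_minus by simp

lemma M_mult2: "a \<in> M \<Longrightarrow> a * r \<in> M"
  using M_mult by (simp add: mult.commute)

lemma N_diff: "x \<in> N \<Longrightarrow> y \<in> N \<Longrightarrow> x - y \<in> N"
  using N_add[of x "-y"] N_minus by simp

lemma N_sum: "(\<And>i. i \<in> J \<Longrightarrow> f i \<in> N) \<Longrightarrow> sum f J \<in> N"
  by (induct J rule: infinite_finite_induct) (auto intro: N_zero N_add)

lemma V_minus: "x \<in> V \<Longrightarrow> - x \<in> V"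
  using V_scale[of x "-1"] by simp

lemma V_diff: "x \<in> V \<Longrightarrow> y \<in> V \<Longrightarrow> x - y \<in> V"
  using V_add[of x "-y"] V_minus by simp

lemma V_sum: "(\<And>i. i \<in> J \<Longrightarrow> f i \<in> V) \<Longrightarrow> sum f J \<in> V"
  by (induct J rule: infinite_finite_induct) (auto intro: N_zero N_V V_add)

definition ind :: "'i set \<Rightarrow> ('i \<Rightarrow> 'v) \<Rightarrow> bool" where
  "ind J f \<longleftrightarrow> (\<forall>c. (\<Sum>i\<in>J. sm (c i) (f i)) \<in> N \<longrightarrow> (\<forall>i\<in>J. c i \<in> M))"

definition spnI :: "'i set \<Rightarrow> ('i \<Rightarrow> 'v) \<Rightarrow> 'v \<Rightarrow> bool" where
  "spnI J f y \<longleftrightarrow> (\<exists>c. y - (\<Sum>i\<in>J. sm (c i) (f i)) \<in> N)"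

lemma spnI_N: "y \<in> N \<Longrightarrow> spnI J f y"
  unfolding spnI_def by (rule exI[of _ "\<lambda>_. 0"]) simp

lemma sum_delta_scale: "finite J \<Longrightarrow> j \<in> J \<Longrightarrow>
   (\<Sum>i\<in>J. sm (if i = j then a else 0) (f i)) = sm a (f j)"
proof -
  assume "finite J" "j \<in> J"
  have "(\<Sum>i\<in>J. sm (if i = j then a else 0) (f i)) = (\<Sum>i\<in>J. if i = j then sm a (f i) else 0)"
    by (rule sum.cong) auto
  also have "\<dots> = sm a (f j)" using \<open>finite J\<close> \<open>j \<in> J\<close> by (simp add: sum.delta)
  finally show ?thesis .
qed

lemma spnI_gen: "finite J \<Longrightarrow> j \<in> J \<Longrightarrow> spnI J f (f j)"
  unfolding spnI_def
  by (rule exI[of _ "\<lambda>i. if i = j then 1 else 0"]) (simp add: sum_delta_scale N_zero)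

lemma spnI_add: "spnI J f x \<Longrightarrow> spnI J f y \<Longrightarrow> spnI J f (x + y)"
proof -
  assume "spnI J f x" "spnI J f y"
  then obtain c d where c: "x - (\<Sum>i\<in>J. sm (c i) (f i)) \<in> N" and d: "y - (\<Sum>i\<in>J. sm (d i) (f i)) \<in> N"
    unfolding spnI_def by blast
  have "x + y - (\<Sum>i\<in>J. sm (c i + d i) (f i)) = (x - (\<Sum>i\<in>J. sm (c i) (f i))) + (y - (\<Sum>i\<in>J. sm (d i) (f i)))"
    by (simp add: scale_left_distrib sum.distrib)
  with N_add[OF c d] show ?thesis unfolding spnI_def by metis
qed

lemma spnI_scale: "spnI J f x \<Longrightarrow> spnI J f (sm r x)"
proof -
  assume "spnI J f x"
  then obtain c where c: "x - (\<Sum>i\<in>J. sm (c i) (f i)) \<in> N"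
    unfolding spnI_def by blast
  have "sm r x - (\<Sum>i\<in>J. sm (r * c i) (f i)) = sm r (x - (\<Sum>i\<in>J. sm (c i) (f i)))"
    by (simp add: scale_right_diff_distrib scale_sum_right)
  with N_scale[OF c] show ?thesis unfolding spnI_def by metis
qed

lemma spnI_minus: "spnI J f x \<Longrightarrow> spnI J f (- x)"
  using spnI_scale[of J f x "-1"] by simp

lemma spnI_diff: "spnI J f x \<Longrightarrow> spnI J f y \<Longrightarrow> spnI J f (x - y)"
  using spnI_add[of J f x "-y"] spnI_minus[of J f y] by simp

lemma spnI_sum: "(\<And>k. k \<in> K \<Longrightarrow> spnI J f (g k)) \<Longrightarrow> spnI J f (sum g K)"
  by (induct K rule: infinite_finite_induct) (auto intro: spnI_N N_zero spnI_add)

lemma spnI_cong: "x - y \<in> N \<Longrightarrow> spnI J f y \<Longrightarrow> spnI J f x"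
  using spnI_add[OF spnI_N[of "x - y" J f], of y] by simp

lemma spnI_trans: "spnI K u y \<Longrightarrow> (\<And>k. k \<in> K \<Longrightarrow> spnI J f (u k)) \<Longrightarrow> spnI J f y"
proof -
  assume a: "spnI K u y" and b: "\<And>k. k \<in> K \<Longrightarrow> spnI J f (u k)"
  then obtain c where c: "y - (\<Sum>k\<in>K. sm (c k) (u k)) \<in> N" unfolding spnI_def by blast
  have "spnI J f (\<Sum>k\<in>K. sm (c k) (u k))" by (intro spnI_sum spnI_scale b)
  with c show ?thesis by (rule spnI_cong)
qed

lemma spnI_mono: "finite J' \<Longrightarrow> J \<subseteq> J' \<Longrightarrow> spnI J f y \<Longrightarrow> spnI J' f y"
  by (erule spnI_trans) (auto intro: spnI_gen)

lemma spnI_empty: "spnI {} f y \<longleftrightarrow> y \<in> N"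
  unfolding spnI_def by simp

lemma ind_cong: assumes "\<And>i. i \<in> J \<Longrightarrow> f i = g i" shows "ind J f = ind J g"
proof -
  have "\<And>c. (\<Sum>i\<in>J. sm (c i) (f i)) = (\<Sum>i\<in>J. sm (c i) (g i))"
    by (rule sum.cong) (simp_all add: assms)
  then show ?thesis by (simp add: ind_def)
qed

lemma spnI_cong2: assumes "\<And>i. i \<in> J \<Longrightarrow> f i = g i" shows "spnI J f y = spnI J g y"
proof -
  have "\<And>c. (\<Sum>i\<in>J. sm (c i) (f i)) = (\<Sum>i\<in>J. sm (c i) (g i))"
    by (rule sum.cong) (simp_all add: assms)
  then show ?thesis by (simp add: spnI_def)
qed

lemma steinitz:
  "finite K \<Longrightarrow> finite J \<Longrightarrow> ind J f \<Longrightarrow> f ` J \<subseteq> V \<Longrightarrow> u ` K \<subseteq> V \<Longrightarrow>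
   (\<forall>i\<in>J. spnI K u (f i)) \<Longrightarrow> card J \<le> card K"
proof (induction K arbitrary: J f rule: finite_induct)
  case empty
  show ?case
  proof (rule ccontr)
    assume "\<not> card J \<le> card {}"
    then obtain i0 where i0: "i0 \<in> J" by (metis card.empty card_eq_0_iff ex_in_conv le_zero_eq)
    have "f i0 \<in> N" using empty.prems(5) i0 by (simp add: spnI_empty)
    hence "(\<Sum>i\<in>J. sm ((\<lambda>i. if i = i0 then 1 else 0) i) (f i)) \<in> N"
      using sum_delta_scale[OF empty.prems(1) i0] by simp
    from empty.prems(2)[unfolded ind_def, THEN spec, THEN mp, OF this] i0
    have "(\<lambda>i. if i = i0 then (1::'r) else 0) i0 \<in> M" by blast
    with one_notin show False by simp
  qed
next
  case (insert x K)
  from insert.prems(5) have "\<forall>i\<in>J. \<exists>c. f i - (\<Sum>k\<in>insert x K. sm (c k) (u k)) \<in> N"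
    unfolding spnI_def by blast
  then obtain c where c: "\<And>i. i \<in> J \<Longrightarrow> f i - (\<Sum>k\<in>insert x K. sm (c i k) (u k)) \<in> N"
    by metis
  have c': "f i - sm (c i x) (u x) - (\<Sum>k\<in>K. sm (c i k) (u k)) \<in> N" if "i \<in> J" for i
  proof -
    have "f i - (\<Sum>k\<in>insert x K. sm (c i k) (u k)) = f i - sm (c i x) (u x) - (\<Sum>k\<in>K. sm (c i k) (u k))"
      using insert.hyps by (simp add: algebra_simps)
    with c[OF that] show ?thesis by simp
  qed
  have ux: "u x \<in> V" using insert.prems(4) by auto
  have uK: "u ` K \<subseteq> V" using insert.prems(4) by auto
  show ?case
  proof (cases "\<forall>i\<in>J. c i x \<in> M")
    case True
    have "\<forall>i\<in>J. spnI K u (f i)"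
    proof
      fix i assume i: "i \<in> J"
      have "f i - (\<Sum>k\<in>K. sm (c i k) (u k)) = (f i - sm (c i x) (u x) - (\<Sum>k\<in>K. sm (c i k) (u k))) + sm (c i x) (u x)"
        by simp
      also have "\<dots> \<in> N" using c'[OF i] MV[OF True[rule_format, OF i] ux] by (rule N_add)
      finally show "spnI K u (f i)" unfolding spnI_def by blast
    qed
    hence "card J \<le> card K" using insert.IH insert.prems uK by blast
    thus ?thesis using insert.hyps by simp
  next
    case False
    then obtain i0 where i0: "i0 \<in> J" and ci0: "c i0 x \<notin> M" by blast
    obtain b where b: "b * c i0 x - 1 \<in> M" using M_inv[OF ci0] by blast
    define J' where "J' = J - {i0}"
    define g where "g i = f i - sm (c i x * b) (f i0)" for i
    have fin': "finite J'" using insert.prems(1) J'_def by simp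
    have gV: "g ` J' \<subseteq> V" using insert.prems(3) i0 unfolding g_def J'_def by (auto intro!: V_diff V_scale)
    have gspan: "\<forall>i\<in>J'. spnI K u (g i)"
    proof
      fix i assume i: "i \<in> J'"
      hence iJ: "i \<in> J" unfolding J'_def by simp
      have sumeq: "(\<Sum>k\<in>K. sm (c i k - (c i x * b) * c i0 k) (u k)) =
          (\<Sum>k\<in>K. sm (c i k) (u k)) - sm (c i x * b) (\<Sum>k\<in>K. sm (c i0 k) (u k))"
        by (simp add: scale_left_diff_distrib sum_subtractf scale_sum_right)
      have eq: "g i - ((\<Sum>k\<in>K. sm (c i k) (u k)) - sm (c i x * b) (\<Sum>k\<in>K. sm (c i0 k) (u k))) =
          (f i - sm (c i x) (u x) - (\<Sum>k\<in>K. sm (c i k) (u k)))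
          - sm (c i x * b) (f i0 - sm (c i0 x) (u x) - (\<Sum>k\<in>K. sm (c i0 k) (u k)))
          + sm (c i x - (c i x * b) * c i0 x) (u x)"
        unfolding g_def by (simp add: algebra_simps)
      have m1: "c i x - (c i x * b) * c i0 x \<in> M"
      proof -
        have "c i x - (c i x * b) * c i0 x = - (c i x * (b * c i0 x - 1))" by (simp add: algebra_simps)
        thus ?thesis using M_minus[OF M_mult[OF b, of "c i x"]] by simp
      qed
      have "g i - ((\<Sum>k\<in>K. sm (c i k) (u k)) - sm (c i x * b) (\<Sum>k\<in>K. sm (c i0 k) (u k))) \<in> N"
        unfolding eq by (intro N_add N_diff N_scale c'[OF iJ] c'[OF i0] MV[OF m1 ux])
      thus "spnI K u (g i)" unfolding spnI_def sumeq[symmetric]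
        by (rule exI[of _ "\<lambda>k. c i k - (c i x * b) * c i0 k"])
    qed
    have gind: "ind J' g"
      unfolding ind_def
    proof (intro allI impI)
      fix e assume e: "(\<Sum>i\<in>J'. sm (e i) (g i)) \<in> N"
      define e' where "e' i = (if i = i0 then - (\<Sum>j\<in>J'. e j * (c j x * b)) else e i)" for i
      have "(\<Sum>i\<in>J'. sm (e i) (g i)) = (\<Sum>i\<in>J'. sm (e i) (f i)) - sm (\<Sum>j\<in>J'. e j * (c j x * b)) (f i0)"
        unfolding g_def by (simp add: scale_right_diff_distrib sum_subtractf scale_sum_left)
      also have "\<dots> = (\<Sum>i\<in>J. sm (e' i) (f i))"
      proof -
        have "(\<Sum>i\<in>J. sm (e' i) (f i)) = sm (e' i0) (f i0) + (\<Sum>i\<in>J'. sm (e' i) (f i))"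
          unfolding J'_def using insert.prems(1) i0 by (simp add: sum.remove)
        moreover have "(\<Sum>i\<in>J'. sm (e' i) (f i)) = (\<Sum>i\<in>J'. sm (e i) (f i))"
          by (rule sum.cong) (auto simp: e'_def J'_def)
        ultimately show ?thesis by (simp add: e'_def)
      qed
      finally have "(\<Sum>i\<in>J. sm (e' i) (f i)) \<in> N" using e by simp
      hence "\<forall>i\<in>J. e' i \<in> M" using insert.prems(2) unfolding ind_def by blast
      thus "\<forall>i\<in>J'. e i \<in> M" unfolding J'_def
      proof (intro ballI)
        fix i assume "\<forall>i\<in>J. e' i \<in> M" "i \<in> J - {i0}"
        thus "e i \<in> M" unfolding e'_def by (metis DiffE singletonI)
      qed
    qed
    have "card J' \<le> card K" using insert.IH[OF fin' gind gV uK gspan] .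
    moreover have "card J = Suc (card J')" using insert.prems(1) i0 J'_def card_Suc_Diff1 by metis
    ultimately show ?thesis using insert.hyps by simp
  qed
qed

lemma dep_span:
  assumes "finite J" "j \<in> J" "(\<Sum>i\<in>J. sm (c i) (f i)) \<in> N" "c j \<notin> M" "f j \<in> V"
  shows "spnI (J - {j}) f (f j)"
proof -
  obtain b where b: "b * c j - 1 \<in> M" using M_inv assms(4) by blast
  have split: "(\<Sum>i\<in>J. sm (c i) (f i)) = sm (c j) (f j) + (\<Sum>i\<in>J-{j}. sm (c i) (f i))"
    using assms(1,2) by (simp add: sum.remove)
  have "f j - (\<Sum>i\<in>J-{j}. sm (- (b * c i)) (f i)) = sm b (\<Sum>i\<in>J. sm (c i) (f i)) - sm (b * c j - 1) (f j)"
    unfolding split by (simp add: algebra_simps scale_sum_right sum_negf)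
  also have "\<dots> \<in> N" using N_diff[OF N_scale[OF assms(3)] MV[OF b assms(5)]] .
  finally show ?thesis unfolding spnI_def by (rule exI[of _ "\<lambda>i. - (b * c i)"])
qed

lemma not_ind_span:
  assumes "finite J" "f ` J \<subseteq> V" "\<not> ind J f"
  shows "\<exists>j\<in>J. spnI (J - {j}) f (f j)"
proof -
  from assms(3) obtain c j where "(\<Sum>i\<in>J. sm (c i) (f i)) \<in> N" "j \<in> J" "c j \<notin> M"
    unfolding ind_def by blast
  thus ?thesis using dep_span[OF assms(1)] assms(2) by blast
qed

lemma ind_insert:
  assumes "finite J" "j \<notin> J" "ind J f" "f j \<in> V" "\<not> spnI J f (f j)"
  shows "ind (insert j J) f"
  unfolding ind_def
proof (intro allI impI)
  fix c assume c: "(\<Sum>i\<in>insert j J. sm (c i) (f i)) \<in> N"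
  have cj: "c j \<in> M"
  proof (rule ccontr)
    assume cj: "c j \<notin> M"
    have "spnI (insert j J - {j}) f (f j)"
      by (rule dep_span) (use assms c cj in auto)
    with assms(2,5) show False by simp
  qed
  have "(\<Sum>i\<in>J. sm (c i) (f i)) = (\<Sum>i\<in>insert j J. sm (c i) (f i)) - sm (c j) (f j)"
    using assms(1,2) by simp
  also have "\<dots> \<in> N" using N_diff[OF c MV[OF cj assms(4)]] .
  finally have "\<forall>i\<in>J. c i \<in> M" using assms(3) unfolding ind_def by blast
  with cj show "\<forall>i\<in>insert j J. c i \<in> M" by simp
qed

lemma extend:
  "finite G \<Longrightarrow> finite J0 \<Longrightarrow> ind J0 f \<Longrightarrow> f ` (J0 \<union> G) \<subseteq> V \<Longrightarrow>
   \<exists>J. J0 \<subseteq> J \<and> J \<subseteq> J0 \<union> G \<and> ind J f \<and> (\<forall>g\<in>G. spnI J f (f g))"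
proof (induction G rule: finite_induct)
  case empty thus ?case by blast
next
  case (insert g G)
  then obtain J where J: "J0 \<subseteq> J" "J \<subseteq> J0 \<union> G" "ind J f" "\<forall>g\<in>G. spnI J f (f g)" by auto
  have finJ: "finite J" using J(2) insert by (meson finite_Un finite_subset)
  show ?case
  proof (cases "spnI J f (f g)")
    case True thus ?thesis using J by blast
  next
    case False
    have gJ: "g \<notin> J" using False spnI_gen[OF finJ] by blast
    have ind': "ind (insert g J) f" by (rule ind_insert[OF finJ gJ J(3) _ False]) (use insert.prems in auto)
    have "\<forall>h\<in>insert g G. spnI (insert g J) f (f h)"
      using J(4) spnI_mono[of "insert g J" J f] finJ spnI_gen[of "insert g J" g f] by auto
    thus ?thesis using J ind' by (intro exI[of _ "insert g J"]) auto
  qed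
qed

lemma ind_reindex:
  assumes "bij_betw h K J" "ind J f" shows "ind K (f \<circ> h)"
  unfolding ind_def
proof (intro allI impI)
  fix c assume c: "(\<Sum>k\<in>K. sm (c k) ((f \<circ> h) k)) \<in> N"
  define c' where "c' = c \<circ> inv_into K h"
  have "(\<Sum>j\<in>J. sm (c' j) (f j)) = (\<Sum>k\<in>K. sm (c' (h k)) (f (h k)))"
    using sum.reindex_bij_betw[OF assms(1), of "\<lambda>j. sm (c' j) (f j)"] by simp
  also have "\<dots> = (\<Sum>k\<in>K. sm (c k) ((f \<circ> h) k))"
    by (rule sum.cong) (auto simp: c'_def bij_betw_inv_into_left[OF assms(1)])
  finally have "\<forall>j\<in>J. c' j \<in> M" using c assms(2) unfolding ind_def by metis
  thus "\<forall>k\<in>K. c k \<in> M" using assms(1)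
    by (metis bij_betw_apply bij_betw_inv_into_left c'_def comp_apply)
qed

definition SS :: "'v set \<Rightarrow> nat set" where
  "SS S = {k. \<exists>v. (\<forall>i<k. v i \<in> S) \<and> ind {..<k} v}"

lemma SS_bound:
  assumes "finite K" "u ` K \<subseteq> V" "S \<subseteq> V" "\<forall>y\<in>S. spnI K u y" "k \<in> SS S"
  shows "k \<le> card K"
proof -
  from assms(5) obtain v where v: "\<forall>i<k. v i \<in> S" "ind {..<k} v" unfolding SS_def by blast
  have "card {..<k} \<le> card K"
    by (rule steinitz[OF assms(1) _ v(2) _ assms(2)]) (use v(1) assms(3,4) in auto)
  thus ?thesis by simp
qed

lemma SS_max:
  assumes "\<forall>k\<in>SS S. k \<le> B" "S \<subseteq> V"
  shows "\<exists>u. (\<forall>i<Sup (SS S). u i \<in> S) \<and> ind {..<Sup (SS S)} u \<and> (\<forall>y\<in>S. spnI {..<Sup (SS S)} u y)"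
    and "finite J \<Longrightarrow> ind J f \<Longrightarrow> f ` J \<subseteq> S \<Longrightarrow> card J \<le> Sup (SS S)"
proof -
  have fin: "finite (SS S)" using assms(1) by (meson finite_atMost finite_subset atMost_iff subsetI)
  have "0 \<in> SS S" unfolding SS_def ind_def by auto
  hence ne: "SS S \<noteq> {}" by blast
  have mem: "Sup (SS S) \<in> SS S" using cSup_eq_Max[OF fin ne] Max_in[OF fin ne] by simp
  have up: "k \<in> SS S \<Longrightarrow> k \<le> Sup (SS S)" for k using le_cSup_finite[OF fin] by blast
  define e where "e = Sup (SS S)"
  from mem obtain u where u: "\<forall>i<e. u i \<in> S" "ind {..<e} u" unfolding SS_def e_def by blast
  have "\<forall>y\<in>S. spnI {..<e} u y"
  proof
    fix y assume y: "y \<in> S"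
    show "spnI {..<e} u y"
    proof (rule ccontr)
      assume ns: "\<not> spnI {..<e} u y"
      have "ind {..<e} (u(e := y))" using u(2) by (subst ind_cong[of _ _ u]) auto
      moreover have "\<not> spnI {..<e} (u(e := y)) ((u(e := y)) e)" using ns by (subst spnI_cong2[of _ _ u]) auto
      ultimately have "ind (insert e {..<e}) (u(e := y))"
        by (intro ind_insert) (use y assms(2) in auto)
      hence "Suc e \<in> SS S" unfolding SS_def using u(1) y by (intro CollectI exI[of _ "u(e := y)"]) (auto simp: lessThan_Suc less_Suc_eq)
      with up show False unfolding e_def by fastforce
    qed
  qed
  thus "\<exists>u. (\<forall>i<Sup (SS S). u i \<in> S) \<and> ind {..<Sup (SS S)} u \<and> (\<forall>y\<in>S. spnI {..<Sup (SS S)} u y)"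
    using u unfolding e_def by blast
  assume J: "finite J" "ind J f" "f ` J \<subseteq> S"
  obtain h where h: "bij_betw h {0..<card J} J" using ex_bij_betw_nat_finite[OF J(1)] by blast
  have "ind {..<card J} (f \<circ> h)" using ind_reindex[OF h J(2)] by (simp add: atLeast0LessThan)
  moreover have "\<forall>i<card J. (f \<circ> h) i \<in> S" using bij_betw_apply[OF h] J(3) by auto
  ultimately have "card J \<in> SS S" unfolding SS_def by blast
  thus "card J \<le> Sup (SS S)" by (rule up)
qed

end


lemma sum_fun_apply: "(\<Sum>j\<in>J. f j) i = (\<Sum>j\<in>J. f j i)"
  by (induct J rule: infinite_finite_induct) auto

section \<open>Ideals\<close>

lemma im_elim: "x \<in> ideal_mult I I \<Longrightarrow> \<exists>(k::nat) X Y. x = (\<Sum>i<k. X i * Y i) \<and> (\<forall>i<k. X i \<in> I \<and> Y i \<in> I)"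
  by (simp add: ideal_mult_def)

context
  fixes I :: "'a::comm_ring_1 set"
  assumes I: "is_ideal I"
begin

lemma id_zero: "0 \<in> I" using I unfolding is_ideal_def by blast
lemma id_add: "x \<in> I \<Longrightarrow> y \<in> I \<Longrightarrow> x + y \<in> I" using I unfolding is_ideal_def by blast
lemma id_mult: "x \<in> I \<Longrightarrow> r * x \<in> I" using I unfolding is_ideal_def by blast
lemma id_mult2: "x \<in> I \<Longrightarrow> x * r \<in> I" using id_mult by (metis mult.commute)
lemma id_minus: "x \<in> I \<Longrightarrow> - x \<in> I" using id_mult[of x "-1"] by simp
lemma id_diff: "x \<in> I \<Longrightarrow> y \<in> I \<Longrightarrow> x - y \<in> I" using id_add[of x "-y"] id_minus by simp
lemma id_sum: "(\<And>i. i \<in> A \<Longrightarrow> f i \<in> I) \<Longrightarrow> sum f A \<in> I"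
  by (induct A rule: infinite_finite_induct) (auto intro: id_zero id_add)
lemma id_one: "1 \<in> I \<Longrightarrow> I = UNIV" using id_mult[of 1] by auto


lemma im_zero: "0 \<in> ideal_mult I I"
  unfolding ideal_mult_def by (rule CollectI, rule exI[of _ 0]) simp

lemma im_prod: "a \<in> I \<Longrightarrow> b \<in> I \<Longrightarrow> a * b \<in> ideal_mult I I"
  unfolding ideal_mult_def
  by (rule CollectI, rule exI[of _ 1], rule exI[of _ "\<lambda>_. a"], rule exI[of _ "\<lambda>_. b"]) simp

lemma im_add_prod: "x \<in> ideal_mult I I \<Longrightarrow> a \<in> I \<Longrightarrow> b \<in> I \<Longrightarrow> x + a * b \<in> ideal_mult I I"
proof -
  assume "x \<in> ideal_mult I I" "a \<in> I" "b \<in> I"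
  then obtain k :: nat and X Y where x: "x = (\<Sum>i<k. X i * Y i)" "\<forall>i<k. X i \<in> I \<and> Y i \<in> I"
    using im_elim by blast
  have "x + a * b = (\<Sum>i<Suc k. (X(k := a)) i * (Y(k := b)) i)"
    unfolding x by (simp add: sum.lessThan_Suc)
  moreover have "\<forall>i<Suc k. (X(k := a)) i \<in> I \<and> (Y(k := b)) i \<in> I"
    using x(2) \<open>a \<in> I\<close> \<open>b \<in> I\<close> by (simp add: less_Suc_eq)
  ultimately show ?thesis unfolding ideal_mult_def by blast
qed

lemma im_add: "x \<in> ideal_mult I I \<Longrightarrow> y \<in> ideal_mult I I \<Longrightarrow> x + y \<in> ideal_mult I I"
proof -
  assume xm: "x \<in> ideal_mult I I" and "y \<in> ideal_mult I I"
  then obtain k :: nat and X Y where y: "y = (\<Sum>i<k. X i * Y i)" "\<forall>i<k. X i \<in> I \<and> Y i \<in> I"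
    using im_elim by blast
  have "\<forall>x. x \<in> ideal_mult I I \<longrightarrow> x + (\<Sum>i<j. X i * Y i) \<in> ideal_mult I I" if "j \<le> k" for j
    using that
  proof (induct j)
    case 0 thus ?case by simp
  next
    case (Suc j)
    show ?case
    proof (intro allI impI)
      fix x assume "x \<in> ideal_mult I I"
      hence "x + (\<Sum>i<j. X i * Y i) \<in> ideal_mult I I" using Suc by simp
      hence "x + (\<Sum>i<j. X i * Y i) + X j * Y j \<in> ideal_mult I I"
        using im_add_prod y(2) Suc.prems by simp
      thus "x + (\<Sum>i<Suc j. X i * Y i) \<in> ideal_mult I I" by (simp add: add.assoc)
    qed
  qed
  with xm y(1) show ?thesis by blast
qed

lemma im_scale: "x \<in> ideal_mult I I \<Longrightarrow> r * x \<in> ideal_mult I I"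
proof -
  assume "x \<in> ideal_mult I I"
  then obtain k :: nat and X Y where x: "x = (\<Sum>i<k. X i * Y i)" "\<forall>i<k. X i \<in> I \<and> Y i \<in> I"
    using im_elim by blast
  have "r * x = (\<Sum>i<k. (r * X i) * Y i)" unfolding x by (simp add: sum_distrib_left mult.assoc)
  moreover have "\<forall>i<k. r * X i \<in> I \<and> Y i \<in> I" using x(2) id_mult by blast
  ultimately show ?thesis unfolding ideal_mult_def
    by (intro CollectI exI[of _ k] exI[of _ "\<lambda>i. r * X i"] exI[of _ Y] conjI) auto
qed

lemma im_minus: "x \<in> ideal_mult I I \<Longrightarrow> - x \<in> ideal_mult I I"
  using im_scale[of x "-1"] by simp

lemma im_sub: "x \<in> ideal_mult I I \<Longrightarrow> x \<in> I"
  unfolding ideal_mult_def by (auto intro!: id_sum id_mult2)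

lemma im_diff: "x \<in> ideal_mult I I \<Longrightarrow> y \<in> ideal_mult I I \<Longrightarrow> x - y \<in> ideal_mult I I"
  using im_add[of x "-y"] im_minus by simp

lemma im_sum: "(\<And>i. i \<in> A \<Longrightarrow> f i \<in> ideal_mult I I) \<Longrightarrow> sum f A \<in> ideal_mult I I"
  by (induct A rule: infinite_finite_induct) (auto intro: im_zero im_add)

end

lemma maximal_inv:
  fixes M :: "'a::comm_ring_1 set"
  assumes "maximal_ideal M" "c \<notin> M"
  shows "\<exists>b. b * c - 1 \<in> M"
proof -
  have M: "is_ideal M" using assms(1) unfolding maximal_ideal_def by blast
  define J where "J = {x + r * c | x r. x \<in> M}"
  have "is_ideal J" unfolding is_ideal_def
  proof (intro conjI ballI allI)
    show "0 \<in> J" unfolding J_def using id_zero[OF M] by (intro CollectI exI[of _ 0]) auto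
  next
    fix x y assume "x \<in> J" "y \<in> J"
    then obtain x1 r1 x2 r2 where "x = x1 + r1 * c" "y = x2 + r2 * c" "x1 \<in> M" "x2 \<in> M"
      unfolding J_def by blast
    thus "x + y \<in> J" unfolding J_def using id_add[OF M]
      by (intro CollectI exI[of _ "x1 + x2"] exI[of _ "r1 + r2"]) (auto simp: algebra_simps)
  next
    fix x r assume "x \<in> J"
    then obtain x1 r1 where x1: "x = x1 + r1 * c" "x1 \<in> M" unfolding J_def by blast
    have "r * x = r * x1 + (r * r1) * c" unfolding x1 by (simp add: algebra_simps)
    moreover have "r * x1 \<in> M" using id_mult[OF M x1(2)] .
    ultimately show "r * x \<in> J" unfolding J_def by blast
  qed
  moreover have "M \<subseteq> J" unfolding J_def by (force intro: exI[of _ 0])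
  moreover have "c \<in> J" unfolding J_def using id_zero[OF M] by (intro CollectI exI[of _ 0] exI[of _ 1]) auto
  ultimately have "J = UNIV" using assms unfolding maximal_ideal_def by blast
  then obtain x r where "1 = x + r * c" "x \<in> M" unfolding J_def by blast
  hence e: "r * c - 1 = - x" by (simp add: algebra_simps)
  have "- x \<in> M" using id_minus[OF M \<open>x \<in> M\<close>] .
  thus ?thesis unfolding e[symmetric] by (rule exI)
qed

lemma maximal_one: "maximal_ideal M \<Longrightarrow> 1 \<notin> M"
  unfolding maximal_ideal_def using id_one by blast

lemma proper_in_maximal:
  fixes I :: "'a::comm_ring_1 set"
  assumes "local_ring m" "is_ideal I" "I \<noteq> UNIV"
  shows "I \<subseteq> m"
proof -
  define A where "A = {K. is_ideal K \<and> I \<subseteq> K \<and> (1::'a) \<notin> K}"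
  have I1: "(1::'a) \<notin> I" using id_one[OF assms(2)] assms(3) by blast
  have ch_ex: "\<forall>C\<in>chains A. \<exists>U\<in>A. \<forall>X\<in>C. X \<subseteq> U"
  proof
    fix C assume C: "C \<in> chains A"
    show "\<exists>U\<in>A. \<forall>X\<in>C. X \<subseteq> U"
    proof (cases "C = {}")
      case True
      have "I \<in> A" unfolding A_def using assms(2) I1 by simp
      thus ?thesis using True by blast
    next
      case False
      then obtain K0 where K0: "K0 \<in> C" by blast
      have CA: "C \<subseteq> A" and ch: "\<And>X Y. X \<in> C \<Longrightarrow> Y \<in> C \<Longrightarrow> X \<subseteq> Y \<or> Y \<subseteq> X"
        using C unfolding chains_def chain_subset_def by auto
      have idC: "\<And>X. X \<in> C \<Longrightarrow> is_ideal X" using CA unfolding A_def by auto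
      have "is_ideal (\<Union>C)" unfolding is_ideal_def
      proof (intro conjI ballI allI)
        show "0 \<in> \<Union>C" using K0 id_zero[OF idC[OF K0]] by blast
      next
        fix x y assume "x \<in> \<Union>C" "y \<in> \<Union>C"
        then obtain X Y where XY: "X \<in> C" "Y \<in> C" "x \<in> X" "y \<in> Y" by blast
        show "x + y \<in> \<Union>C"
        proof (cases "X \<subseteq> Y")
          case True
          hence "x + y \<in> Y" using id_add[OF idC[OF XY(2)]] XY by blast
          thus ?thesis using XY by blast
        next
          case False
          hence "Y \<subseteq> X" using ch[OF XY(1,2)] by blast
          hence "x + y \<in> X" using id_add[OF idC[OF XY(1)]] XY by blast
          thus ?thesis using XY by blast
        qed
      next
        fix x r assume "x \<in> \<Union>C"
        then obtain X where X: "X \<in> C" "x \<in> X" by blast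
        hence "r * x \<in> X" using id_mult[OF idC[OF X(1)]] by blast
        thus "r * x \<in> \<Union>C" using X by blast
      qed
      moreover have "I \<subseteq> \<Union>C" using K0 CA unfolding A_def by blast
      moreover have "1 \<notin> \<Union>C" using CA unfolding A_def by blast
      ultimately have "\<Union>C \<in> A" unfolding A_def by blast
      thus ?thesis by blast
    qed
  qed
  obtain M0 where M0: "M0 \<in> A" "\<forall>X\<in>A. M0 \<subseteq> X \<longrightarrow> X = M0"
    using Zorn_Lemma2[OF ch_ex] by blast
  have M0i: "is_ideal M0" "I \<subseteq> M0" "1 \<notin> M0" using M0(1) unfolding A_def by auto
  have "maximal_ideal M0" unfolding maximal_ideal_def
  proof (intro conjI allI impI)
    show "is_ideal M0" by (rule M0i(1))
    show "M0 \<noteq> UNIV" using M0i(3) by blast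
  next
    fix J assume J: "is_ideal J" "M0 \<subseteq> J"
    show "J = M0 \<or> J = UNIV"
    proof (cases "1 \<in> J")
      case True thus ?thesis using id_one[OF J(1)] by blast
    next
      case False
      hence "J \<in> A" unfolding A_def using J M0i(2) by blast
      thus ?thesis using M0(2) J(2) by blast
    qed
  qed
  hence "M0 = m" using assms(1) unfolding local_ring_def by blast
  thus ?thesis using M0i(2) by blast
qed

section \<open>Homomorphisms\<close>

context
  fixes \<phi> :: "'a::comm_ring_1 \<Rightarrow> 'b::comm_ring_1"
  assumes h: "ring_hom \<phi>"
begin

lemma h0: "\<phi> 0 = 0" using h unfolding ring_hom_def by blast
lemma h1: "\<phi> 1 = 1" using h unfolding ring_hom_def by blast
lemma hadd: "\<phi> (x + y) = \<phi> x + \<phi> y" using h unfolding ring_hom_def by blast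
lemma hmult: "\<phi> (x * y) = \<phi> x * \<phi> y" using h unfolding ring_hom_def by blast
lemma hminus: "\<phi> (- x) = - \<phi> x"
proof -
  have "\<phi> (-x) + \<phi> x = 0" using hadd[of "-x" x] h0 by simp
  thus ?thesis by (simp add: eq_neg_iff_add_eq_0)
qed
lemma hdiff: "\<phi> (x - y) = \<phi> x - \<phi> y" using hadd[of x "-y"] hminus by simp
lemma hsum: "\<phi> (sum f A) = (\<Sum>a\<in>A. \<phi> (f a))"
  by (induct A rule: infinite_finite_induct) (auto simp: h0 hadd)

lemma him:
  assumes "\<phi> ` m \<subseteq> n" "x \<in> ideal_mult m m"
  shows "\<phi> x \<in> ideal_mult n n"
proof -
  obtain k :: nat and X Y where x: "x = (\<Sum>i<k. X i * Y i)" "\<forall>i<k. X i \<in> m \<and> Y i \<in> m"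
    using im_elim[OF assms(2)] by blast
  have e1: "\<phi> x = (\<Sum>i<k. \<phi> (X i) * \<phi> (Y i))" unfolding x by (simp add: hsum hmult)
  have e2: "\<forall>i<k. \<phi> (X i) \<in> n \<and> \<phi> (Y i) \<in> n" using x(2) assms(1) by auto
  show ?thesis unfolding ideal_mult_def mem_Collect_eq
    by (rule exI[of _ k], rule exI[of _ "\<lambda>i. \<phi> (X i)"], rule exI[of _ "\<lambda>i. \<phi> (Y i)"]) (use e1 e2 in simp)
qed

end

lemma lin_ring:
  fixes M :: "'a::comm_ring_1 set"
  assumes "maximal_ideal M"
  shows "lin (*) M (ideal_mult M M) M"
proof -
  have I: "is_ideal M" using assms unfolding maximal_ideal_def by blast
  show ?thesis
  proof (unfold_locales)
    fix a b r c x y :: 'a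
    show "a * (x + y) = a * x + a * y" by (rule distrib_left)
    show "(a + b) * x = a * x + b * x" by (rule distrib_right)
    show "a * (b * x) = a * b * x" by (rule mult.assoc[symmetric])
    show "1 * x = x" by (rule mult_1_left)
    show "a \<in> M \<Longrightarrow> b \<in> M \<Longrightarrow> a + b \<in> M" by (rule id_add[OF I])
    show "a \<in> M \<Longrightarrow> r * a \<in> M" by (rule id_mult[OF I])
    show "1 \<notin> M" by (rule maximal_one[OF assms])
    show "c \<notin> M \<Longrightarrow> \<exists>b. b * c - 1 \<in> M" by (rule maximal_inv[OF assms])
    show "0 \<in> ideal_mult M M" by (rule im_zero[OF I])
    show "x \<in> ideal_mult M M \<Longrightarrow> y \<in> ideal_mult M M \<Longrightarrow> x + y \<in> ideal_mult M M" by (rule im_add[OF I])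
    show "x \<in> ideal_mult M M \<Longrightarrow> - x \<in> ideal_mult M M" by (rule im_minus[OF I])
    show "x \<in> ideal_mult M M \<Longrightarrow> r * x \<in> ideal_mult M M" by (rule im_scale[OF I])
    show "x \<in> ideal_mult M M \<Longrightarrow> x \<in> M" by (rule im_sub[OF I])
    show "a \<in> M \<Longrightarrow> x \<in> M \<Longrightarrow> a * x \<in> ideal_mult M M" by (rule im_prod[OF I])
  qed
qed

lemma lin_tuple:
  fixes M :: "'a::comm_ring_1 set"
  assumes "maximal_ideal M"
  shows "lin (\<lambda>c w i. c * w i) M {w :: nat \<Rightarrow> 'a. \<forall>i<d. w i \<in> M} UNIV"
proof -
  have I: "is_ideal M" using assms unfolding maximal_ideal_def by blast
  show ?thesis
  proof (unfold_locales)
    fix a b r c :: 'a and x y :: "nat \<Rightarrow> 'a"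
    show "(\<lambda>i. a * (x + y) i) = (\<lambda>i. a * x i) + (\<lambda>i. a * y i)" by (simp add: algebra_simps fun_eq_iff)
    show "(\<lambda>i. (a + b) * x i) = (\<lambda>i. a * x i) + (\<lambda>i. b * x i)" by (simp add: algebra_simps fun_eq_iff)
    show "(\<lambda>i. a * (b * x i)) = (\<lambda>i. a * b * x i)" by (simp add: mult.assoc)
    show "(\<lambda>i. 1 * x i) = x" by simp
    show "a \<in> M \<Longrightarrow> b \<in> M \<Longrightarrow> a + b \<in> M" by (rule id_add[OF I])
    show "a \<in> M \<Longrightarrow> r * a \<in> M" by (rule id_mult[OF I])
    show "1 \<notin> M" by (rule maximal_one[OF assms])
    show "c \<notin> M \<Longrightarrow> \<exists>b. b * c - 1 \<in> M" by (rule maximal_inv[OF assms])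
    show "0 \<in> {w :: nat \<Rightarrow> 'a. \<forall>i<d. w i \<in> M}" using id_zero[OF I] by simp
    show "x \<in> {w. \<forall>i<d. w i \<in> M} \<Longrightarrow> y \<in> {w. \<forall>i<d. w i \<in> M} \<Longrightarrow> x + y \<in> {w. \<forall>i<d. w i \<in> M}"
      using id_add[OF I] by simp
    show "x \<in> {w. \<forall>i<d. w i \<in> M} \<Longrightarrow> - x \<in> {w. \<forall>i<d. w i \<in> M}" using id_minus[OF I] by simp
    show "x \<in> {w. \<forall>i<d. w i \<in> M} \<Longrightarrow> (\<lambda>i. r * x i) \<in> {w. \<forall>i<d. w i \<in> M}" using id_mult[OF I] by simp
    show "x \<in> {w. \<forall>i<d. w i \<in> M} \<Longrightarrow> x \<in> UNIV" by simp
    show "x \<in> UNIV \<Longrightarrow> y \<in> UNIV \<Longrightarrow> x + y \<in> UNIV" by simp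
    show "x \<in> UNIV \<Longrightarrow> (\<lambda>i. r * x i) \<in> UNIV" by simp
    show "a \<in> M \<Longrightarrow> x \<in> UNIV \<Longrightarrow> (\<lambda>i. a * x i) \<in> {w. \<forall>i<d. w i \<in> M}" using id_mult2[OF I] by simp
  qed
qed


locale tlin =
  fixes M :: "'a::comm_ring_1 set" and d :: nat
  assumes max: "maximal_ideal M"

sublocale tlin \<subseteq> lin "\<lambda>c w i. c * w i" M "{w. \<forall>i<d. w i \<in> M}" UNIV
  by (rule lin_tuple[OF max])

context tlin
begin

definition eps :: "nat \<Rightarrow> nat \<Rightarrow> 'a" where
  "eps p = (\<lambda>i. if i = p then 1 else 0)"

lemma ind_iff: "ind J f \<longleftrightarrow> (\<forall>c. (\<forall>i<d. (\<Sum>j\<in>J. c j * f j i) \<in> M) \<longrightarrow> (\<forall>j\<in>J. c j \<in> M))"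
  by (simp add: ind_def sum_fun_apply)

lemma spnI_iff: "spnI J f y \<longleftrightarrow> (\<exists>c. \<forall>i<d. y i - (\<Sum>j\<in>J. c j * f j i) \<in> M)"
  by (simp add: spnI_def sum_fun_apply)

lemma Mz: "0 \<in> M" using max unfolding maximal_ideal_def is_ideal_def by blast

lemma sum_eps: "i < d \<Longrightarrow> (\<Sum>p<d. w p * eps p i) = w i"
proof -
  assume i: "i < d"
  have "(\<Sum>p<d. w p * eps p i) = (\<Sum>p<d. if p = i then w p else 0)"
    by (rule sum.cong) (auto simp: eps_def)
  also have "\<dots> = w i" using i by simp
  finally show ?thesis .
qed

lemma span_eps: "spnI {..<d} eps w"
  unfolding spnI_iff by (rule exI[of _ w]) (simp add: sum_eps Mz)

lemma ind_eps: "ind {..<d} eps"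
  unfolding ind_iff
proof (intro allI impI ballI)
  fix c j assume H: "\<forall>i<d. (\<Sum>p\<in>{..<d}. c p * eps p i) \<in> M" and j: "j \<in> {..<d}"
  have "(\<Sum>p\<in>{..<d}. c p * eps p j) = c j" using j sum_eps[of j c] by simp
  thus "c j \<in> M" using H j by auto
qed

lemma SS_le_d: "k \<in> SS S \<Longrightarrow> k \<le> d"
  using SS_bound[of "{..<d}" eps S k] span_eps by simp

end

theorem lemma2p4:
  fixes \<phi> :: "'a::comm_ring_1 \<Rightarrow> 'b::comm_ring_1"
    and m :: "'a set" and n :: "'b set" and I :: "'a set"
  assumes "noetherian TYPE('a)" and "noetherian TYPE('b)"
    and "local_ring m" and "local_ring n"
    and "ring_hom \<phi>" and "\<phi> ` m \<subseteq> n"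
    and "is_ideal I" and "I \<noteq> UNIV"
  shows "delta_B \<phi> n I \<le> delta_A m I \<and> delta_A m I - delta_B \<phi> n I \<le> rd \<phi> m n"
proof -
  have mm: "maximal_ideal m" using assms(3) unfolding local_ring_def by blast
  have mn: "maximal_ideal n" using assms(4) unfolding local_ring_def by blast
  have Im: "is_ideal m" using mm unfolding maximal_ideal_def by blast
  have In: "is_ideal n" using mn unfolding maximal_ideal_def by blast
  note hom = h0[OF assms(5)] h1[OF assms(5)] hadd[OF assms(5)] hmult[OF assms(5)]
     hdiff[OF assms(5)] hsum[OF assms(5)] hminus[OF assms(5)]
  have hm2: "\<And>x. x \<in> ideal_mult m m \<Longrightarrow> \<phi> x \<in> ideal_mult n n"
    using him[OF assms(5,6)] .
  have phin: "\<And>x. x \<in> m \<Longrightarrow> \<phi> x \<in> n" using assms(6) by blast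
  interpret RA: lin "(*)" m "ideal_mult m m" m by (rule lin_ring[OF mm])
  interpret RB: lin "(*)" n "ideal_mult n n" n by (rule lin_ring[OF mn])
  have Isub: "I \<subseteq> m" by (rule proper_in_maximal[OF assms(3,7,8)])
  define SA where "SA = ideal_add I (ideal_mult m m)"
  define SB where "SB = ideal_add (ext_ideal \<phi> I) (ideal_mult n n)"
  have SA_m: "SA \<subseteq> m" unfolding SA_def ideal_add_def using Isub im_sub[OF Im] id_add[OF Im] by blast
  have ext_n: "ext_ideal \<phi> I \<subseteq> n"
  proof
    fix y assume "y \<in> ext_ideal \<phi> I"
    then obtain k :: nat and a b where y: "y = (\<Sum>i<k. \<phi> (a i) * b i)" "\<forall>i<k. a i \<in> I"
      unfolding ext_ideal_def by blast
    show "y \<in> n" unfolding y(1) using y(2) Isub phin by (intro id_sum[OF In] id_mult2[OF In]) auto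
  qed
  have SB_n: "SB \<subseteq> n" unfolding SB_def ideal_add_def using ext_n im_sub[OF In] id_add[OF In] by blast
  have I_SA: "I \<subseteq> SA" unfolding SA_def ideal_add_def using im_zero[OF Im] by force
  obtain F where F: "finite F" "F \<subseteq> m" "m = ideal_gen F"
    using assms(1) Im unfolding noetherian_def by blast
  obtain G where G: "finite G" "G \<subseteq> n" "n = ideal_gen G"
    using assms(2) In unfolding noetherian_def by blast
  have spanF: "\<forall>y\<in>m. RA.spnI F id y"
  proof
    fix y assume "y \<in> m"
    then obtain c where "y = (\<Sum>x\<in>F. c x * x)" using F(3) unfolding ideal_gen_def by blast
    thus "RA.spnI F id y" unfolding RA.spnI_def using RA.N_zero by (intro exI[of _ c]) simp
  qed
  have spanG: "\<forall>y\<in>n. RB.spnI G id y"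
  proof
    fix y assume "y \<in> n"
    then obtain c where "y = (\<Sum>x\<in>G. c x * x)" using G(3) unfolding ideal_gen_def by blast
    thus "RB.spnI G id y" unfolding RB.spnI_def using RB.N_zero by (intro exI[of _ c]) simp
  qed
  have boundA: "\<forall>k\<in>RA.SS S. k \<le> card F" if "S \<subseteq> m" for S
    using RA.SS_bound[OF F(1), of id S] F(2) that spanF by auto
  have boundB: "\<forall>k\<in>RB.SS S. k \<le> card G" if "S \<subseteq> n" for S
    using RB.SS_bound[OF G(1), of id S] G(2) that spanG by auto
  have dA: "delta_A m I = Sup (RA.SS SA)"
    unfolding delta_A_def dim_mod_def RA.SS_def RA.ind_def indep_mod_def SA_def by (simp add: Ball_def)
  have dB: "delta_B \<phi> n I = Sup (RB.SS SB)"
    unfolding delta_B_def dim_mod_def RB.SS_def RB.ind_def indep_mod_def SB_def by (simp add: Ball_def)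
  define e where "e = delta_A m I"
  define k0 where "k0 = delta_B \<phi> n I"
  obtain u where u: "\<forall>i<e. u i \<in> SA" "RA.ind {..<e} u" "\<forall>y\<in>SA. RA.spnI {..<e} u y"
    using RA.SS_max(1)[OF boundA[OF SA_m] SA_m] unfolding e_def dA by blast
  obtain v where v: "\<forall>i<k0. v i \<in> SB" "RB.ind {..<k0} v"
    using RB.SS_max(1)[OF boundB[OF SB_n] SB_n] unfolding k0_def dB by blast
  have k0_bound: "\<And>J f. finite J \<Longrightarrow> RB.ind J f \<Longrightarrow> f ` J \<subseteq> SB \<Longrightarrow> card J \<le> k0"
    using RB.SS_max(2)[OF boundB[OF SB_n] SB_n] unfolding k0_def dB by blast
  have um: "\<And>j. j < e \<Longrightarrow> u j \<in> m" using u(1) SA_m by blast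
  obtain x0 where x0: "\<forall>i<Sup (RA.SS m). x0 i \<in> m" "RA.ind {..<Sup (RA.SS m)} x0"
     "\<forall>y\<in>m. RA.spnI {..<Sup (RA.SS m)} x0 y"
    using RA.SS_max(1)[OF boundA[of m] order_refl] by blast
  have "cotangent_basis m (Sup (RA.SS m)) x0"
    unfolding cotangent_basis_def indep_mod_def using x0 unfolding RA.ind_def RA.spnI_def by auto
  hence "\<exists>p. cotangent_basis m (fst p) (snd p)" by (intro exI[of _ "(Sup (RA.SS m), x0)"]) simp
  define p where "p = (SOME p. cotangent_basis m (fst p) (snd p))"
  define d where "d = fst p"
  define x where "x = snd p"
  have cb: "cotangent_basis m d x" unfolding d_def x_def p_def
    by (rule someI_ex) fact
  have rdeq: "rd \<phi> m n = rd_wrt \<phi> n d x"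
    unfolding rd_def p_def[symmetric] d_def x_def by (simp add: case_prod_beta)
  have xm: "\<And>i. i < d \<Longrightarrow> x i \<in> m" and xspan: "\<And>y. y \<in> m \<Longrightarrow> \<exists>c. y - (\<Sum>i<d. c i * x i) \<in> ideal_mult m m"
    using cb unfolding cotangent_basis_def by auto
  have mapspan: "RB.spnI J (\<lambda>j. \<phi> (f j)) (\<phi> y)" if sp: "RA.spnI J f y" for J and f :: "'c \<Rightarrow> 'a" and y
  proof -
    obtain c where c: "y - (\<Sum>i\<in>J. c i * f i) \<in> ideal_mult m m" using sp unfolding RA.spnI_def by blast
    have "\<phi> (y - (\<Sum>i\<in>J. c i * f i)) = \<phi> y - (\<Sum>i\<in>J. \<phi> (c i) * \<phi> (f i))" by (simp add: hom)
    with hm2[OF c] show ?thesis unfolding RB.spnI_def by (intro exI[of _ "\<lambda>i. \<phi> (c i)"]) simp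
  qed
  have SBspan: "RB.spnI {..<e} (\<lambda>j. \<phi> (u j)) y" if yS: "y \<in> SB" for y
  proof -
    obtain s q where sq: "y = s + q" "s \<in> ext_ideal \<phi> I" "q \<in> ideal_mult n n"
      using yS unfolding SB_def ideal_add_def by blast
    obtain k :: nat and a b where s: "s = (\<Sum>i<k. \<phi> (a i) * b i)" "\<forall>i<k. a i \<in> I"
      using sq(2) unfolding ext_ideal_def by blast
    have "RB.spnI {..<e} (\<lambda>j. \<phi> (u j)) (\<phi> (a t) * b t)" if tk: "t < k" for t
    proof -
      have "RB.spnI {..<e} (\<lambda>j. \<phi> (u j)) (\<phi> (a t))"
        using mapspan u(3) I_SA s(2) tk by blast
      from RB.spnI_scale[OF this, of "b t"] show ?thesis by (simp add: mult.commute)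
    qed
    hence "RB.spnI {..<e} (\<lambda>j. \<phi> (u j)) s" unfolding s(1) by (intro RB.spnI_sum) auto
    thus ?thesis unfolding sq(1) using RB.spnI_add RB.spnI_N[OF sq(3)] by blast
  qed
  have part1: "k0 \<le> e"
  proof -
    have "card {..<k0} \<le> card {..<e}"
      by (rule RB.steinitz) (use v SB_n um phin SBspan in auto)
    thus ?thesis by simp
  qed
  have part2: "e \<le> rd_wrt \<phi> n d x + k0"
  proof -
    interpret TA: tlin m d by unfold_locales (rule mm)
    interpret TB: tlin n d by unfold_locales (rule mn)
    have "\<forall>j. \<exists>c. j < e \<longrightarrow> u j - (\<Sum>i<d. c i * x i) \<in> ideal_mult m m"
    proof
      fix j show "\<exists>c. j < e \<longrightarrow> u j - (\<Sum>i<d. c i * x i) \<in> ideal_mult m m"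
      proof (cases "j < e")
        case True
        then obtain c where "u j - (\<Sum>i<d. c i * x i) \<in> ideal_mult m m" using xspan[OF um[OF True]] by blast
        thus ?thesis by blast
      qed simp
    qed
    from choice[OF this] obtain a where a0: "\<forall>j. j < e \<longrightarrow> u j - (\<Sum>i<d. a j i * x i) \<in> ideal_mult m m"
      by (rule exE)
    have a: "\<And>j. j < e \<Longrightarrow> u j - (\<Sum>i<d. a j i * x i) \<in> ideal_mult m m" using a0 by blast
    have aind: "TA.ind {..<e} a"
      unfolding TA.ind_iff
    proof (intro allI impI ballI)
      fix c j assume H: "\<forall>i<d. (\<Sum>j\<in>{..<e}. c j * a j i) \<in> m" and j: "j \<in> {..<e}"
      have "(\<Sum>j<e. c j * (\<Sum>i<d. a j i * x i)) = (\<Sum>j<e. \<Sum>i<d. c j * a j i * x i)"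
        by (simp add: sum_distrib_left mult.assoc del: RA.scale_scale)
      also have "\<dots> = (\<Sum>i<d. \<Sum>j<e. c j * a j i * x i)" by (rule sum.swap[of "\<lambda>j i. c j * a j i * x i" "{..<d}" "{..<e}"])
      also have "\<dots> = (\<Sum>i<d. (\<Sum>j<e. c j * a j i) * x i)" by (simp add: sum_distrib_right)
      finally have eq1: "(\<Sum>j<e. c j * (\<Sum>i<d. a j i * x i)) = (\<Sum>i<d. (\<Sum>j<e. c j * a j i) * x i)" .
      have eq2: "(\<Sum>j<e. c j * u j) = (\<Sum>j<e. c j * (u j - (\<Sum>i<d. a j i * x i))) + (\<Sum>j<e. c j * (\<Sum>i<d. a j i * x i))"
        by (simp add: right_diff_distrib sum_subtractf)
      have s1: "(\<Sum>j<e. c j * (u j - (\<Sum>i<d. a j i * x i))) \<in> ideal_mult m m"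
        by (rule RA.N_sum, rule RA.N_scale, rule a) simp
      have s2: "(\<Sum>i<d. (\<Sum>j<e. c j * a j i) * x i) \<in> ideal_mult m m"
      proof (rule RA.N_sum)
        fix i assume "i \<in> {..<d}"
        hence "i < d" by simp
        show "(\<Sum>j<e. c j * a j i) * x i \<in> ideal_mult m m"
          by (rule RA.MV) (use H \<open>i < d\<close> xm in auto)
      qed
      have "(\<Sum>j<e. c j * u j) \<in> ideal_mult m m"
        unfolding eq2 eq1 by (rule RA.N_add[OF s1 s2])
      thus "c j \<in> m" using u(2) j unfolding RA.ind_def by blast
    qed
    define \<rho> where "\<rho> j = (\<lambda>i. \<phi> (a j i))" for j
    have \<rho>ind: "TB.ind {..<e} \<rho>"
    proof -
      define h where "h k = (if k < e then a k else TA.eps (k - e))" for k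
      define hB where "hB k = (if k < e then \<rho> k else TB.eps (k - e))" for k
      have "TA.ind {..<e} h = TA.ind {..<e} a" by (rule TA.ind_cong) (simp add: h_def)
      hence hind0: "TA.ind {..<e} h" using aind by simp
      have "\<exists>J. {..<e} \<subseteq> J \<and> J \<subseteq> {..<e} \<union> {e..<e+d} \<and> TA.ind J h \<and> (\<forall>g\<in>{e..<e+d}. TA.spnI J h (h g))"
        by (rule TA.extend) (use hind0 in auto)
      then obtain J1 where J1: "{..<e} \<subseteq> J1" "J1 \<subseteq> {..<e} \<union> {e..<e+d}" "TA.ind J1 h"
          "\<forall>g\<in>{e..<e+d}. TA.spnI J1 h (h g)" by blast
      have finJ1: "finite J1" by (rule finite_subset[OF J1(2)]) simp
      have cardJ1: "card J1 \<le> d"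
        using TA.steinitz[of "{..<d}" J1 h TA.eps] finJ1 J1(3) TA.span_eps by auto
      have epsA: "TA.spnI J1 h (TA.eps p)" if pd: "p < d" for p
        using J1(4)[rule_format, of "e + p"] pd by (simp add: h_def)
      have tmap: "TB.spnI J (\<lambda>k i. \<phi> (f k i)) (\<lambda>i. \<phi> (y i))" if sp: "TA.spnI J f y" for J :: "nat set" and f y
      proof -
        obtain c where c: "\<forall>i<d. y i - (\<Sum>j\<in>J. c j * f j i) \<in> m" using sp unfolding TA.spnI_iff by blast
        have "\<forall>i<d. \<phi> (y i) - (\<Sum>j\<in>J. \<phi> (c j) * \<phi> (f j i)) \<in> n"
        proof (intro allI impI)
          fix i assume "i < d"
          hence "\<phi> (y i - (\<Sum>j\<in>J. c j * f j i)) \<in> n" using c phin by blast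
          thus "\<phi> (y i) - (\<Sum>j\<in>J. \<phi> (c j) * \<phi> (f j i)) \<in> n" by (simp add: hom)
        qed
        thus ?thesis unfolding TB.spnI_iff by (intro exI[of _ "\<lambda>j. \<phi> (c j)"])
      qed
      have phieps: "(\<lambda>i. \<phi> (TA.eps p i)) = TB.eps p" for p
        by (auto simp: TA.eps_def TB.eps_def hom fun_eq_iff)
      have hBh: "(\<lambda>k i. \<phi> (h k i)) = hB"
      proof (rule ext)
        fix k show "(\<lambda>i. \<phi> (h k i)) = hB k"
          by (cases "k < e") (simp_all add: h_def hB_def \<rho>_def phieps)
      qed
      have epsB: "TB.spnI J1 hB (TB.eps p)" if pd: "p < d" for p
        using tmap[OF epsA[OF pd]] unfolding hBh phieps .
      show ?thesis
      proof (rule ccontr)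
        assume nind: "\<not> TB.ind {..<e} \<rho>"
        have "TB.ind {..<e} \<rho> = TB.ind {..<e} hB" by (rule TB.ind_cong) (simp add: hB_def)
        with nind have "\<not> TB.ind {..<e} hB" by simp
        then obtain j0 where j0: "j0 \<in> {..<e}" "TB.spnI ({..<e} - {j0}) hB (hB j0)"
          using TB.not_ind_span[of "{..<e}" hB] by auto
        have j0J1: "j0 \<in> J1" using j0 J1(1) by auto
        have s1: "TB.spnI (J1 - {j0}) hB (hB k)" if kJ: "k \<in> J1" for k
        proof (cases "k = j0")
          case True thus ?thesis using TB.spnI_mono[of "J1 - {j0}" "{..<e} - {j0}" hB] j0 J1(1) finJ1 by auto
        next
          case False thus ?thesis using TB.spnI_gen[of "J1 - {j0}" k hB] finJ1 kJ by auto
        qed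
        have "TB.spnI (J1 - {j0}) hB (TB.eps p)" if pd: "p < d" for p
          by (rule TB.spnI_trans[OF epsB[OF pd]]) (rule s1)
        hence "card {..<d} \<le> card (J1 - {j0})"
          using TB.steinitz[of "J1 - {j0}" "{..<d}" TB.eps hB] finJ1 TB.ind_eps by auto
        moreover have "card (J1 - {j0}) = card J1 - 1" using finJ1 j0J1 by simp
        moreover have "card J1 \<ge> 1" using finJ1 j0J1 by (metis One_nat_def Suc_leI card_gt_0_iff empty_iff)
        ultimately show False using cardJ1 by simp
      qed
    qed
    have ind0: "RB.ind {} (\<lambda>j. \<phi> (u j))" unfolding RB.ind_def by simp
    have "\<exists>J. {} \<subseteq> J \<and> J \<subseteq> {} \<union> {..<e} \<and> RB.ind J (\<lambda>j. \<phi> (u j)) \<and> (\<forall>g\<in>{..<e}. RB.spnI J (\<lambda>j. \<phi> (u j)) (\<phi> (u g)))"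
      by (rule RB.extend) (use ind0 um phin in auto)
    then obtain J where J: "J \<subseteq> {..<e}" "RB.ind J (\<lambda>j. \<phi> (u j))"
        "\<forall>g\<in>{..<e}. RB.spnI J (\<lambda>j. \<phi> (u j)) (\<phi> (u g))" by auto
    have finJ: "finite J" by (rule finite_subset[OF J(1)]) simp
    have uSB: "\<phi> (u j) \<in> SB" if je: "j < e" for j
    proof -
      obtain i0 q0 where iq: "u j = i0 + q0" "i0 \<in> I" "q0 \<in> ideal_mult m m"
        using u(1) je unfolding SA_def ideal_add_def by blast
      have ei: "\<phi> i0 * 1 \<in> ext_ideal \<phi> I" unfolding ext_ideal_def mem_Collect_eq
        by (rule exI[of _ "1::nat"], rule exI[of _ "\<lambda>_. i0"], rule exI[of _ "\<lambda>_. 1::'b"]) (simp add: iq(2))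
      have "\<phi> (u j) = \<phi> i0 * 1 + \<phi> q0" by (simp add: iq(1) hom)
      thus ?thesis unfolding SB_def ideal_add_def using ei hm2[OF iq(3)] by blast
    qed
    have cardJ: "card J \<le> k0" using k0_bound[OF finJ J(2)] uSB J(1) by auto
    define Ker where "Ker = {z. (\<Sum>i<d. \<phi> (x i) * z i) \<in> ideal_mult n n}"
    define r where "r = rd_wrt \<phi> n d x"
    have req: "r = Sup (TB.SS Ker)"
      unfolding r_def rd_wrt_def TB.SS_def Ker_def TB.ind_iff tuple_indep_def by (simp add: Ball_def)
    have bK: "\<forall>k\<in>TB.SS Ker. k \<le> d" using TB.SS_le_d by blast
    obtain w where w: "\<forall>j<r. w j \<in> Ker" "TB.ind {..<r} w" "\<forall>z\<in>Ker. TB.spnI {..<r} w z"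
      using TB.SS_max(1)[OF bK subset_UNIV] unfolding req by blast
    define hh where "hh k = (if k < r then w k else \<rho> (k - r))" for k
    define KK where "KK = {..<r} \<union> (\<lambda>l. l + r) ` J"
    have finKK: "finite KK" unfolding KK_def using finJ by simp
    define P where "P l = (\<Sum>i<d. \<phi> (x i) * \<rho> l i)" for l
    have Dl: "\<phi> (u l) - P l \<in> ideal_mult n n" if le: "l < e" for l
    proof -
      have "\<phi> (u l - (\<Sum>i<d. a l i * x i)) = \<phi> (u l) - P l"
        by (simp add: hom \<rho>_def P_def mult.commute)
      thus ?thesis using hm2[OF a[OF le]] by simp
    qed
    have gl: "TB.spnI KK hh (\<rho> l)" if lJ: "l \<in> J" for l
    proof -
      have e: "\<rho> l = hh (l + r)" by (simp add: hh_def)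
      have "l + r \<in> KK" unfolding KK_def using lJ by blast
      from TB.spnI_gen[OF finKK this, of hh] show ?thesis unfolding e .
    qed
    have gw: "TB.spnI KK hh (w k)" if kr: "k \<in> {..<r}" for k
    proof -
      have e: "w k = hh k" using kr by (simp add: hh_def)
      have "k \<in> KK" unfolding KK_def using kr by blast
      from TB.spnI_gen[OF finKK this, of hh] show ?thesis unfolding e .
    qed
    have \<rho>span: "TB.spnI KK hh (\<rho> j)" if je: "j < e" for j
    proof (cases "j \<in> J")
      case True thus ?thesis by (rule gl)
    next
      case False
      obtain c where c: "\<phi> (u j) - (\<Sum>l\<in>J. c l * \<phi> (u l)) \<in> ideal_mult n n"
        using J(3) je unfolding RB.spnI_def by blast
      define z where "z = \<rho> j - (\<Sum>l\<in>J. (\<lambda>i. c l * \<rho> l i))"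
      have zi: "z i = \<rho> j i - (\<Sum>l\<in>J. c l * \<rho> l i)" for i unfolding z_def by (simp add: sum_fun_apply)
      have sw: "(\<Sum>i<d. \<Sum>l\<in>J. \<phi> (x i) * (c l * \<rho> l i)) = (\<Sum>l\<in>J. c l * P l)"
      proof -
        have "(\<Sum>i<d. \<Sum>l\<in>J. \<phi> (x i) * (c l * \<rho> l i)) = (\<Sum>l\<in>J. \<Sum>i<d. \<phi> (x i) * (c l * \<rho> l i))"
          by (rule sum.swap[of "\<lambda>i l. \<phi> (x i) * (c l * \<rho> l i)" J "{..<d}"])
        also have "\<dots> = (\<Sum>l\<in>J. c l * P l)" unfolding P_def
          by (simp add: sum_distrib_left mult.left_commute del: RB.scale_scale)
        finally show ?thesis .
      qed
      have e1: "(\<Sum>i<d. \<phi> (x i) * z i) = P j - (\<Sum>l\<in>J. c l * P l)"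
        unfolding zi sw[symmetric] by (simp add: right_diff_distrib sum_subtractf sum_distrib_left P_def)
      have e2: "P j - (\<Sum>l\<in>J. c l * P l) = (\<phi> (u j) - (\<Sum>l\<in>J. c l * \<phi> (u l))) - (\<phi> (u j) - P j) + (\<Sum>l\<in>J. c l * (\<phi> (u l) - P l))"
        by (simp add: right_diff_distrib sum_subtractf algebra_simps)
      have "z \<in> Ker" unfolding Ker_def mem_Collect_eq e1 e2
        by (intro RB.N_add RB.N_diff RB.N_sum RB.N_scale c Dl je) (use J(1) in auto)
      hence "TB.spnI {..<r} w z" using w(3) by blast
      hence zK: "TB.spnI KK hh z" by (rule TB.spnI_trans) (rule gw)
      have "TB.spnI KK hh (z + (\<Sum>l\<in>J. (\<lambda>i. c l * \<rho> l i)))"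
        by (intro TB.spnI_add zK TB.spnI_sum TB.spnI_scale gl)
      moreover have "z + (\<Sum>l\<in>J. (\<lambda>i. c l * \<rho> l i)) = \<rho> j" unfolding z_def by simp
      ultimately show ?thesis by simp
    qed
    have "card {..<e} \<le> card KK"
      by (rule TB.steinitz[OF finKK]) (use \<rho>ind \<rho>span in auto)
    moreover have "card KK \<le> r + card J" unfolding KK_def
      using card_Un_le[of "{..<r}" "(\<lambda>l. l + r) ` J"] card_image_le[OF finJ, of "\<lambda>l. l + r"] by simp
    ultimately show ?thesis using cardJ unfolding r_def by simp
  qed
  show ?thesis using part1 part2 rdeq unfolding e_def k0_def by simp
qed

end
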